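(* Let $T$ be a (finite) tree with an even number of vertices. Then there exists a labeling $f:E(T)\to\{-1,+1\}$ such that $|e_f(-1)-e_f(1)|=1$, $|f(v)|\le 1$ for every vertex $v$ of $T$, and $|v_f(-1)-v_f(1)|=2$.
   Context: Given a labeling $f:E(T)\to\{-1,+1\}$, for each vertex $v$ define $f(v)=\sum_{e\in I(v)} f(e)$, where $I(v)$ is the set of edges incident to $v$. For an integer $c$, $e_f(c)$ denotes the number of edges with label $c$, and $v_f(c)$ the number of vertices $v$ with $f(v)=c$. *)

theory Defs
  imports Main
begin

definition simple_graph :: "'a set \<Rightarrow> 'a set set \<Rightarrow> bool" where
  "simple_graph V E \<longleftrightarrow> finite V \<and> (\<forall>e\<in>E. e \<subseteq> V \<and> card e = 2)"

definition connected_graph :: "'a set \<Rightarrow> 'a set set \<Rightarrow> bool" where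
  "connected_graph V E \<longleftrightarrow> (\<forall>u\<in>V. \<forall>v\<in>V. (\<lambda>x y. {x, y} \<in> E)\<^sup>*\<^sup>* u v)"

definition is_cycle :: "'a set set \<Rightarrow> 'a list \<Rightarrow> bool" where
  "is_cycle E vs \<longleftrightarrow> length vs \<ge> 3 \<and> distinct vs
     \<and> (\<forall>i. Suc i < length vs \<longrightarrow> {vs ! i, vs ! Suc i} \<in> E)
     \<and> {last vs, hd vs} \<in> E"

definition acyclic_graph :: "'a set set \<Rightarrow> bool" where
  "acyclic_graph E \<longleftrightarrow> \<not> (\<exists>vs. is_cycle E vs)"

definition is_tree :: "'a set \<Rightarrow> 'a set set \<Rightarrow> bool" where
  "is_tree V E \<longleftrightarrow> simple_graph V E \<and> V \<noteq> {} \<and> connected_graph V E \<and> acyclic_graph E"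

definition vertex_label :: "'a set set \<Rightarrow> ('a set \<Rightarrow> int) \<Rightarrow> 'a \<Rightarrow> int" where
  "vertex_label E f v = (\<Sum>e\<in>{e\<in>E. v \<in> e}. f e)"

definition edge_count :: "'a set set \<Rightarrow> ('a set \<Rightarrow> int) \<Rightarrow> int \<Rightarrow> nat" where
  "edge_count E f c = card {e\<in>E. f e = c}"

definition vertex_count :: "'a set \<Rightarrow> 'a set set \<Rightarrow> ('a set \<Rightarrow> int) \<Rightarrow> int \<Rightarrow> nat" where
  "vertex_count V E f c = card {v\<in>V. vertex_label E f v = c}"

end

theory Submission
  imports Defs
begin

definition nbrs :: "'a set set \<Rightarrow> 'a \<Rightarrow> 'a set" where
  "nbrs E x = {y. {x,y} \<in> E}"

definition is_path :: "'a set \<Rightarrow> 'a set set \<Rightarrow> 'a list \<Rightarrow> bool" where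
  "is_path V E vs \<longleftrightarrow> distinct vs \<and> set vs \<subseteq> V \<and> (\<forall>i. Suc i < length vs \<longrightarrow> {vs!i, vs!Suc i} \<in> E)"

lemma edge_card: "simple_graph V E \<Longrightarrow> e \<in> E \<Longrightarrow> \<exists>a b. a \<noteq> b \<and> e = {a,b}"
proof -
  assume "simple_graph V E" "e \<in> E"
  then have "card e = 2" by (simp add: simple_graph_def)
  then show ?thesis by (auto simp: card_2_iff)
qed

lemma no_loop: "simple_graph V E \<Longrightarrow> {a,a} \<notin> E"
  by (auto simp: simple_graph_def)

lemma edge_in_V: "simple_graph V E \<Longrightarrow> {a,b} \<in> E \<Longrightarrow> a \<in> V \<and> b \<in> V"
  by (auto simp: simple_graph_def)

lemma finite_E: "simple_graph V E \<Longrightarrow> finite E"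
  unfolding simple_graph_def by (auto intro: finite_subset[of E "Pow V"])

lemma cycle_from_path:
  assumes p: "is_path V E vs" and ij: "Suc i < j" "j < length vs" and e: "{vs!i, vs!j} \<in> E"
  shows "\<exists>cs. is_cycle E cs"
proof -
  let ?cs = "take (Suc (j - i)) (drop i vs)"
  have len: "length ?cs = Suc (j-i)" using ij by auto
  have nth: "?cs ! k = vs ! (i+k)" if "k < Suc (j-i)" for k using that ij by auto
  have "is_cycle E ?cs"
    unfolding is_cycle_def
  proof (intro conjI allI impI)
    show "3 \<le> length ?cs" using len ij by auto
    show "distinct ?cs" using p by (auto simp: is_path_def)
    fix k assume "Suc k < length ?cs"
    then show "{?cs ! k, ?cs ! Suc k} \<in> E" using nth[of k] nth[of "Suc k"] len p ij
      by (auto simp: is_path_def)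
  next
    have "last ?cs = vs ! j" using len nth[of "j-i"] ij by (simp add: last_conv_nth)
    moreover have "hd ?cs = vs ! i" using len nth[of 0] ij by (simp add: hd_conv_nth)
    ultimately show "{last ?cs, hd ?cs} \<in> E" using e by (simp add: insert_commute)
  qed
  then show ?thesis by blast
qed

lemma closed_all:
  assumes c: "connected_graph V E" and a: "a \<in> S" "a \<in> V" and cl: "\<forall>x\<in>S. nbrs E x \<subseteq> S"
  shows "V \<subseteq> S"
proof
  fix v assume "v \<in> V"
  then have "(\<lambda>x y. {x, y} \<in> E)\<^sup>*\<^sup>* a v" using c a unfolding connected_graph_def by blast
  then show "v \<in> S"
  proof (induction rule: rtranclp_induct)
    case base then show ?case using a by simp
  next
    case (step y z) then show ?case using cl by (auto simp: nbrs_def)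
  qed
qed

lemma nbrs_remove: "x \<noteq> u \<Longrightarrow> nbrs {e\<in>E. u \<notin> e} x = nbrs E x - {u}"
  by (auto simp: nbrs_def)

lemma remove_leaf:
  assumes t: "is_tree V E" and l: "nbrs E u = {w}"
  shows "is_tree (V - {u}) {e\<in>E. u \<notin> e}"
proof -
  have sg: "simple_graph V E" using t by (simp add: is_tree_def)
  have uw: "{u,w} \<in> E" using l by (auto simp: nbrs_def)
  have wu: "w \<noteq> u" using uw no_loop[OF sg] by auto
  have wV: "w \<in> V" using edge_in_V[OF sg uw] by simp
  let ?E = "{e\<in>E. u \<notin> e}"
  let ?R = "\<lambda>x y. {x, y} \<in> E" and ?R' = "\<lambda>x y. {x, y} \<in> ?E"
  define pr where "pr z = (if z = u then w else z)" for z
  have proj: "?R'\<^sup>*\<^sup>* (pr x) (pr y)" if "?R\<^sup>*\<^sup>* x y" for x y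
    using that
  proof (induction rule: rtranclp_induct)
    case base then show ?case by simp
  next
    case (step y z)
    have "pr y = pr z \<or> ?R' (pr y) (pr z)"
    proof (cases "y = u \<or> z = u")
      case True
      then show ?thesis
      proof
        assume "y = u" then have "z \<in> nbrs E u" using step(2) by (auto simp: nbrs_def)
        then show ?thesis using l \<open>y = u\<close> by (auto simp: pr_def)
      next
        assume "z = u" then have "y \<in> nbrs E u" using step(2) by (auto simp: nbrs_def insert_commute)
        then show ?thesis using l \<open>z = u\<close> by (auto simp: pr_def)
      qed
    next
      case False then show ?thesis using step(2) by (auto simp: pr_def)
    qed
    then show ?case
    proof
      assume "pr y = pr z" then show ?thesis using step(3) by simp
    next
      assume "?R' (pr y) (pr z)" with step(3) show ?thesis
        by (rule rtranclp.rtrancl_into_rtrancl)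
    qed
  qed
  have "connected_graph (V - {u}) ?E"
    unfolding connected_graph_def
  proof (intro ballI)
    fix x y assume "x \<in> V - {u}" "y \<in> V - {u}"
    then have "?R\<^sup>*\<^sup>* x y" using t unfolding is_tree_def connected_graph_def by blast
    then show "?R'\<^sup>*\<^sup>* x y" using proj[of x y] \<open>x \<in> V - {u}\<close> \<open>y \<in> V - {u}\<close> by (simp add: pr_def)
  qed
  moreover have "simple_graph (V - {u}) ?E" using sg by (auto simp: simple_graph_def)
  moreover have "acyclic_graph ?E"
  proof -
    have "is_cycle E cs" if "is_cycle ?E cs" for cs using that unfolding is_cycle_def by blast
    then show ?thesis using t unfolding is_tree_def acyclic_graph_def by blast
  qed
  moreover have "V - {u} \<noteq> {}" using wV wu by auto
  ultimately show ?thesis by (simp add: is_tree_def)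
qed

lemma edges_at_leaf:
  assumes sg: "simple_graph V E" and l: "nbrs E u = {w}"
  shows "E = insert {u,w} {e\<in>E. u \<notin> e}" "{u,w} \<notin> {e\<in>E. u \<notin> e}"
proof -
  have "e = {u,w}" if "e \<in> E" "u \<in> e" for e
  proof -
    obtain a b where ab: "a \<noteq> b" "e = {a,b}" using edge_card[OF sg \<open>e \<in> E\<close>] by blast
    show ?thesis
    proof (cases "u = a")
      case True then have "b \<in> nbrs E u" using ab that by (auto simp: nbrs_def)
      then show ?thesis using l ab True by auto
    next
      case False then have "u = b" using ab that by auto
      then have "a \<in> nbrs E u" using ab that by (auto simp: nbrs_def insert_commute)
      then show ?thesis using l ab \<open>u = b\<close> by auto
    qed
  qed
  moreover have "{u,w} \<in> E" using l by (auto simp: nbrs_def)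
  ultimately show "E = insert {u,w} {e\<in>E. u \<notin> e}" by blast
  show "{u,w} \<notin> {e\<in>E. u \<notin> e}" by simp
qed


lemma max_path_end:
  assumes t: "is_tree V E" and p: "is_path V E vs" and len: "length vs \<ge> 2"
    and mx: "\<forall>ws. is_path V E ws \<longrightarrow> length ws \<le> length vs"
  shows "nbrs E (vs!0) = {vs!1}"
proof
  have sg: "simple_graph V E" using t by (simp add: is_tree_def)
  show "{vs!1} \<subseteq> nbrs E (vs!0)" using p len by (auto simp: is_path_def nbrs_def)
  show "nbrs E (vs!0) \<subseteq> {vs!1}"
  proof
    fix y assume y: "y \<in> nbrs E (vs!0)"
    then have e: "{vs!0, y} \<in> E" by (simp add: nbrs_def)
    have yV: "y \<in> V" using edge_in_V[OF sg e] by simp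
    show "y \<in> {vs!1}"
    proof (cases "y \<in> set vs")
      case False
      have "is_path V E (y # vs)"
        unfolding is_path_def
      proof (intro conjI allI impI)
        show "distinct (y # vs)" using False p by (simp add: is_path_def)
        show "set (y # vs) \<subseteq> V" using yV p by (simp add: is_path_def)
        fix i assume i: "Suc i < length (y # vs)"
        show "{(y # vs) ! i, (y # vs) ! Suc i} \<in> E"
        proof (cases i)
          case 0 then show ?thesis using e by (simp add: insert_commute)
        next
          case (Suc k) then show ?thesis using p i by (simp add: is_path_def)
        qed
      qed
      then show ?thesis using mx by fastforce
    next
      case True
      then obtain k where k: "k < length vs" "y = vs ! k" by (metis in_set_conv_nth)
      show ?thesis
      proof (cases "k \<ge> 2")
        case True
        have "\<exists>cs. is_cycle E cs" using cycle_from_path[OF p, of 0 k] True k e by simp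
        then show ?thesis using t by (simp add: is_tree_def acyclic_graph_def)
      next
        case False
        moreover have "k \<noteq> 0"
        proof
          assume "k = 0" then have "{vs!0, vs!0} \<in> E" using e k by simp
          then show False using no_loop[OF sg] by blast
        qed
        ultimately have "k = 1" by simp
        then show ?thesis using k by simp
      qed
    qed
  qed
qed

lemma tree_structure:
  assumes t: "is_tree V E" and c: "card V \<ge> 3"
  shows "(\<exists>u u' w. u \<noteq> u' \<and> nbrs E u = {w} \<and> nbrs E u' = {w})
       \<or> (\<exists>u w p. nbrs E u = {w} \<and> nbrs E w = {u,p} \<and> p \<noteq> u)"
proof -
  have sg: "simple_graph V E" using t by (simp add: is_tree_def)
  have fV: "finite V" using sg by (simp add: simple_graph_def)
  have con: "connected_graph V E" using t by (simp add: is_tree_def)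
  obtain a where aV: "a \<in> V" using t by (auto simp: is_tree_def)
  have "\<exists>b. {a,b} \<in> E"
  proof (rule ccontr)
    assume "\<not> ?thesis"
    then have "V \<subseteq> {a}" using closed_all[OF con, of a "{a}"] aV by (auto simp: nbrs_def)
    then have "card V \<le> card {a}" by (intro card_mono) auto
    then have "card V \<le> 1" by simp
    then show False using c by simp
  qed
  then obtain b where ab: "{a,b} \<in> E" by blast
  have "a \<noteq> b" using ab no_loop[OF sg] by auto
  then have p0: "is_path V E [a,b]" using ab edge_in_V[OF sg ab] by (auto simp: is_path_def less_Suc_eq)
  have bnd: "\<forall>ws. is_path V E ws \<longrightarrow> length ws < Suc (card V)"
  proof (intro allI impI)
    fix ws assume "is_path V E ws"
    then have "length ws = card (set ws)" "set ws \<subseteq> V" by (auto simp: is_path_def distinct_card)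
    moreover have "card (set ws) \<le> card V" using card_mono[OF fV] calculation(2) .
    ultimately show "length ws < Suc (card V)" by simp
  qed
  obtain vs where p: "is_path V E vs" and mx: "\<forall>ws. is_path V E ws \<longrightarrow> length ws \<le> length vs"
    using Lattices_Big.ex_has_greatest_nat[of "is_path V E" "[a,b]" length, OF p0 bnd] by blast
  have len: "length vs \<ge> 2" using mx p0 by fastforce
  have n0: "nbrs E (vs!0) = {vs!1}" using max_path_end[OF t p len mx] .
  have dvs: "distinct vs" using p by (simp add: is_path_def)
  have vne: "vs \<noteq> []" using len by auto
  have d01: "vs!0 \<noteq> vs!1" using nth_eq_iff_index_eq[OF dvs, of 0 1] len vne by simp
  show ?thesis
  proof (cases "\<exists>z \<in> nbrs E (vs!1). z \<noteq> vs!0 \<and> (length vs \<ge> 3 \<longrightarrow> z \<noteq> vs!2)")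
    case True
    then obtain z where z: "{vs!1, z} \<in> E" "z \<noteq> vs!0" "length vs \<ge> 3 \<longrightarrow> z \<noteq> vs!2"
      by (auto simp: nbrs_def)
    have zV: "z \<in> V" using edge_in_V[OF sg z(1)] by simp
    have zn: "z \<notin> set vs"
    proof
      assume "z \<in> set vs"
      then obtain k where k: "k < length vs" "z = vs ! k" by (metis in_set_conv_nth)
      have "k \<noteq> 0" using z(2) k(2) by (cases "k = 0") auto
      moreover have "k \<noteq> 2" using z(3) k by (cases "k = 2") auto
      moreover have "k \<noteq> 1"
      proof
        assume "k = 1" then have "{vs!1, vs!1} \<in> E" using z(1) k by simp
        then show False using no_loop[OF sg] by blast
      qed
      ultimately have "k \<ge> 3" by simp
      then have "\<exists>cs. is_cycle E cs" using cycle_from_path[OF p, of 1 k] k z by simp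
      then show False using t by (simp add: is_tree_def acyclic_graph_def)
    qed
    let ?ws = "z # tl vs"
    have pw: "is_path V E ?ws"
      unfolding is_path_def
    proof (intro conjI allI impI)
      have st: "set (tl vs) \<subseteq> set vs" by (cases vs) auto
      show "distinct ?ws" using zn p st by (auto simp: is_path_def distinct_tl)
      show "set ?ws \<subseteq> V" using zV p st by (auto simp: is_path_def)
      fix i assume i: "Suc i < length ?ws"
      show "{?ws ! i, ?ws ! Suc i} \<in> E"
      proof (cases i)
        case 0 then show ?thesis using z(1) len by (simp add: insert_commute nth_tl)
      next
        case (Suc k) then show ?thesis using p i len by (simp add: is_path_def nth_tl)
      qed
    qed
    have lw: "length ?ws = length vs" using len by simp
    have "nbrs E z = {?ws ! 1}"
      using max_path_end[OF t pw] lw len mx by simp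
    then have "nbrs E z = {vs!1}" using len by (simp add: nth_tl)
    then show ?thesis using n0 z(2) by blast
  next
    case False
    then have n1: "nbrs E (vs!1) \<subseteq> insert (vs!0) (if length vs \<ge> 3 then {vs!2} else {})"
      by auto
    show ?thesis
    proof (cases "length vs \<ge> 3")
      case True
      have "{vs!1, vs!Suc 1} \<in> E" using p True unfolding is_path_def by auto
      then have "vs!2 \<in> nbrs E (vs!1)" by (simp add: nbrs_def numeral_2_eq_2)
      moreover have "vs!0 \<in> nbrs E (vs!1)"
      proof -
        have "vs!1 \<in> nbrs E (vs!0)" using n0 by simp
        then have "{vs!0, vs!1} \<in> E" unfolding nbrs_def by simp
        then have "{vs!1, vs!0} \<in> E" by (simp add: insert_commute)
        then show ?thesis unfolding nbrs_def by simp
      qed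
      ultimately have "nbrs E (vs!1) = {vs!0, vs!2}" using n1 True by auto
      moreover have "vs!2 \<noteq> vs!0" using nth_eq_iff_index_eq[OF dvs, of 2 0] True vne by simp
      ultimately show ?thesis using n0 by blast
    next
      case False
      then have n1': "nbrs E (vs!1) \<subseteq> {vs!0}" using n1 by simp
      have "vs!0 \<in> set vs" using vne by simp
      then have v0V: "vs!0 \<in> V" using p by (auto simp: is_path_def)
      have "V \<subseteq> {vs!0, vs!1}"
        using closed_all[OF con, of "vs!0" "{vs!0, vs!1}"] n0 n1' v0V
        by auto
      then have "card V \<le> card {vs!0, vs!1}" by (intro card_mono) auto
      also have "\<dots> \<le> 2" by (simp add: card_insert_if)
      finally have "card V \<le> 2" .
      then show ?thesis using c by simp
    qed
  qed
qed


lemma label_insert: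
  assumes "finite E0" "e0 \<notin> E0"
  shows "vertex_label (insert e0 E0) (f(e0 := c)) v = vertex_label E0 f v + (if v \<in> e0 then c else 0)"
proof -
  have s: "sum (f(e0 := c)) {e\<in>E0. v \<in> e} = sum f {e\<in>E0. v \<in> e}"
    using assms by (intro sum.cong) auto
  show ?thesis
  proof (cases "v \<in> e0")
    case True
    then have "{e\<in>insert e0 E0. v \<in> e} = insert e0 {e\<in>E0. v \<in> e}" by auto
    then show ?thesis using True assms s by (simp add: vertex_label_def)
  next
    case False
    then have "{e\<in>insert e0 E0. v \<in> e} = {e\<in>E0. v \<in> e}" by auto
    then show ?thesis using False assms s by (simp add: vertex_label_def)
  qed
qed

lemma sum_insert_upd:
  assumes "finite E0" "e0 \<notin> E0"
  shows "sum (f(e0 := c)) (insert e0 E0) = sum f E0 + c"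
proof -
  have "sum (f(e0 := c)) E0 = sum f E0" using assms by (intro sum.cong) auto
  then show ?thesis using assms by (simp add: add.commute)
qed

lemma label_zero: "(\<forall>e\<in>E. v \<notin> e) \<Longrightarrow> vertex_label E f v = 0"
proof -
  assume "\<forall>e\<in>E. v \<notin> e"
  then have "{e\<in>E. v \<in> e} = {}" by blast
  then show ?thesis unfolding vertex_label_def by (metis sum.empty)
qed

lemma main:
  assumes "is_tree V E" "even (card V)"
  shows "\<exists>f :: 'a set \<Rightarrow> int. (\<forall>e\<in>E. f e \<in> {-1, 1}) \<and> (\<forall>v\<in>V. \<bar>vertex_label E f v\<bar> \<le> 1)
           \<and> sum f E \<in> {-1, 1}"
  using assms
proof (induction "card V" arbitrary: V E rule: less_induct)
  case less
  have t: "is_tree V E" by fact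
  have sg: "simple_graph V E" using t by (simp add: is_tree_def)
  have fV: "finite V" using sg by (simp add: simple_graph_def)
  have fE: "finite E" using finite_E[OF sg] .
  have "card V \<noteq> 0" using t fV by (simp add: is_tree_def)
  then have c2: "card V \<ge> 2" using less.prems(2) by presburger
  show ?case
  proof (cases "card V = 2")
    case True
    then obtain a b where V: "V = {a,b}" "a \<noteq> b" unfolding card_2_iff by blast
    have Esub: "E \<subseteq> {{a,b}}"
    proof
      fix e assume "e \<in> E"
      then obtain x y where "x \<noteq> y" "e = {x,y}" using edge_card[OF sg] by blast
      moreover have "e \<subseteq> V" using sg \<open>e \<in> E\<close> by (simp add: simple_graph_def)
      ultimately show "e \<in> {{a,b}}" using V by auto
    qed
    have "(\<lambda>x y. {x, y} \<in> E)\<^sup>*\<^sup>* a b" using t V by (simp add: is_tree_def connected_graph_def)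
    then have "E \<noteq> {}"
    proof (rule converse_rtranclpE)
      assume "a = b" then show ?thesis using V(2) by simp
    next
      fix y assume "{a, y} \<in> E" then show ?thesis by blast
    qed
    then have E: "E = {{a,b}}" using Esub by blast
    let ?f = "\<lambda>e::'a set. (1::int)"
    have "vertex_label E ?f v = 1" if "v \<in> V" for v
    proof -
      have "{e\<in>E. v \<in> e} = {{a,b}}" using E V that by auto
      then show ?thesis by (simp add: vertex_label_def)
    qed
    moreover have "sum ?f E = 1" using E by simp
    ultimately show ?thesis by (intro exI[of _ ?f]) simp
  next
    case False
    then have c4: "card V \<ge> 4" using c2 less.prems(2) by presburger
    have c3: "card V \<ge> 3" using c4 by simp
    from tree_structure[OF t c3]
    consider (A) u u' w where "u \<noteq> u'" "nbrs E u = {w}" "nbrs E u' = {w}"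
      | (B) u w p where "nbrs E u = {w}" "nbrs E w = {u,p}" "p \<noteq> u"
      by blast
    then show ?thesis
    proof cases
      case A
      have uw: "{u,w} \<in> E" "{u',w} \<in> E" using A by (auto simp: nbrs_def)
      have wu: "w \<noteq> u" "w \<noteq> u'" using uw no_loop[OF sg] by auto
      have inV: "u \<in> V" "u' \<in> V" "w \<in> V" using uw edge_in_V[OF sg] by auto
      define E1 where "E1 = {e\<in>E. u \<notin> e}"
      define E2 where "E2 = {e\<in>E1. u' \<notin> e}"
      have t1: "is_tree (V - {u}) E1" unfolding E1_def using remove_leaf[OF t A(2)] .
      have sg1: "simple_graph (V - {u}) E1" using t1 by (simp add: is_tree_def)
      have n1: "nbrs E1 u' = {w}" unfolding E1_def using nbrs_remove[of u' u E] A wu by auto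
      have t2: "is_tree (V - {u} - {u'}) E2" unfolding E2_def using remove_leaf[OF t1 n1] .
      have cV: "card (V - {u} - {u'}) = card V - 2" using inV A(1) fV by simp
      have lt: "card (V - {u} - {u'}) < card V" and ev: "even (card (V - {u} - {u'}))"
        using cV c4 less.prems(2) by auto
      obtain g :: "'a set \<Rightarrow> int" where g: "\<forall>e\<in>E2. g e \<in> {-1, 1}"
        "\<forall>v\<in>V - {u} - {u'}. \<bar>vertex_label E2 g v\<bar> \<le> 1" "sum g E2 \<in> {-1, 1}"
        using less.hyps[OF lt t2 ev] by blast
      have E1e: "E1 = insert {u',w} E2" "{u',w} \<notin> E2"
        unfolding E2_def by (rule edges_at_leaf[OF sg1 n1])+
      have Ee: "E = insert {u,w} E1" "{u,w} \<notin> E1"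
        unfolding E1_def by (rule edges_at_leaf[OF sg A(2)])+
      have fE2: "finite E2" "finite E1" using fE unfolding E1_def E2_def by auto
      have nu: "\<forall>e\<in>E2. u \<notin> e" "\<forall>e\<in>E2. u' \<notin> e" unfolding E2_def E1_def by auto
      define f where "f = (g({u',w} := -1))({u,w} := 1)"
      have lab: "vertex_label E f v = vertex_label E2 g v + (if v \<in> {u',w} then -1 else 0)
                   + (if v \<in> {u,w} then 1 else 0)" for v
      proof -
        have l1: "vertex_label E f v = vertex_label E1 (g({u',w}:=-1)) v + (if v \<in> {u,w} then 1 else 0)"
          unfolding f_def by (subst Ee(1), rule label_insert[OF fE2(2) Ee(2)])
        have l2: "vertex_label E1 (g({u',w}:=-1)) v = vertex_label E2 g v + (if v \<in> {u',w} then -1 else 0)"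
          by (subst E1e(1), rule label_insert[OF fE2(1) E1e(2)])
        show ?thesis using l1 l2 by simp
      qed
      have sm: "sum f E = sum g E2"
      proof -
        have l1: "sum f E = sum (g({u',w}:=-1)) E1 + 1"
          unfolding f_def by (subst Ee(1), rule sum_insert_upd[OF fE2(2) Ee(2)])
        have l2: "sum (g({u',w}:=-1)) E1 = sum g E2 + -1"
          by (subst E1e(1), rule sum_insert_upd[OF fE2(1) E1e(2)])
        show ?thesis using l1 l2 by simp
      qed
      have "\<forall>v\<in>V. \<bar>vertex_label E f v\<bar> \<le> 1"
      proof
        fix v assume v: "v \<in> V"
        show "\<bar>vertex_label E f v\<bar> \<le> 1"
        proof (cases "v = u \<or> v = u'")
          case True
          then show ?thesis
          proof
            assume "v = u"
            then show ?thesis unfolding lab using label_zero[OF nu(1), of g] A(1) not_sym[OF wu(1)] by simp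
          next
            assume "v = u'"
            then show ?thesis unfolding lab using label_zero[OF nu(2), of g] not_sym[OF A(1)] not_sym[OF wu(2)] by simp
          qed
        next
          case False
          then have "v \<in> V - {u} - {u'}" using v by simp
          then have b: "\<bar>vertex_label E2 g v\<bar> \<le> 1" using g(2) by blast
          show ?thesis
          proof (cases "v = w")
            case True then show ?thesis unfolding lab using b wu by simp
          next
            case False then show ?thesis unfolding lab using b \<open>\<not> (v = u \<or> v = u')\<close> by simp
          qed
        qed
      qed
      moreover have "\<forall>e\<in>E. f e \<in> {-1, 1}"
      proof
        fix e assume "e \<in> E"
        show "f e \<in> {-1, 1}"
        proof (cases "e = {u,w}")
          case True then show ?thesis by (simp add: f_def)
        next
          case F1: False
          show ?thesis
          proof (cases "e = {u',w}")
            case True then show ?thesis using F1 by (simp add: f_def)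
          next
            case False
            have "e \<in> insert {u,w} (insert {u',w} E2)" using \<open>e \<in> E\<close> Ee(1) E1e(1) by simp
            then have "e \<in> E2" using F1 False by simp
            then have "g e \<in> {-1, 1}" using g(1) by blast
            then show ?thesis using F1 False by (simp add: f_def)
          qed
        qed
      qed
      moreover have "sum f E \<in> {-1, 1}" using sm g(3) by simp
      ultimately show ?thesis by (intro exI[of _ f]) blast
    next
      case B
      have "w \<in> nbrs E u" "p \<in> nbrs E w" using B(1,2) by simp_all
      then have uw: "{u,w} \<in> E" "{w,p} \<in> E" by (simp_all add: nbrs_def)
      have wu: "w \<noteq> u" "p \<noteq> w" using uw no_loop[OF sg] by auto
      have inV: "u \<in> V" "p \<in> V" "w \<in> V" using uw edge_in_V[OF sg] by auto
      define E1 where "E1 = {e\<in>E. u \<notin> e}"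
      define E2 where "E2 = {e\<in>E1. w \<notin> e}"
      have t1: "is_tree (V - {u}) E1" unfolding E1_def using remove_leaf[OF t B(1)] .
      have sg1: "simple_graph (V - {u}) E1" using t1 by (simp add: is_tree_def)
      have "nbrs E1 w = nbrs E w - {u}" unfolding E1_def by (rule nbrs_remove[OF wu(1)])
      then have n1: "nbrs E1 w = {p}" using B(2) B(3) by simp
      have t2: "is_tree (V - {u} - {w}) E2" unfolding E2_def using remove_leaf[OF t1 n1] .
      have cV: "card (V - {u} - {w}) = card V - 2" using inV wu fV by simp
      have lt: "card (V - {u} - {w}) < card V" and ev: "even (card (V - {u} - {w}))"
        using cV c4 less.prems(2) by auto
      obtain g :: "'a set \<Rightarrow> int" where g: "\<forall>e\<in>E2. g e \<in> {-1, 1}"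
        "\<forall>v\<in>V - {u} - {w}. \<bar>vertex_label E2 g v\<bar> \<le> 1" "sum g E2 \<in> {-1, 1}"
        using less.hyps[OF lt t2 ev] by blast
      have E1e: "E1 = insert {w,p} E2" "{w,p} \<notin> E2"
        unfolding E2_def by (rule edges_at_leaf[OF sg1 n1])+
      have Ee: "E = insert {u,w} E1" "{u,w} \<notin> E1"
        unfolding E1_def by (rule edges_at_leaf[OF sg B(1)])+
      have fE2: "finite E2" "finite E1" using fE unfolding E1_def E2_def by auto
      have nu: "\<forall>e\<in>E2. u \<notin> e" "\<forall>e\<in>E2. w \<notin> e" unfolding E2_def E1_def by auto
      define tt where "tt = (if vertex_label E2 g p = 0 then 1 else - vertex_label E2 g p)"
      have pV2: "p \<in> V - {u} - {w}" using inV B(3) wu by auto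
      have bp: "\<bar>vertex_label E2 g p\<bar> \<le> 1" using g(2) pV2 by blast
      then have "vertex_label E2 g p = -1 \<or> vertex_label E2 g p = 0 \<or> vertex_label E2 g p = 1"
        by linarith
      then have ttv: "tt \<in> {-1,1}" "\<bar>vertex_label E2 g p + tt\<bar> \<le> 1"
        unfolding tt_def by auto
      define f where "f = (g({w,p} := tt))({u,w} := -tt)"
      have lab: "vertex_label E f v = vertex_label E2 g v + (if v \<in> {w,p} then tt else 0)
                   + (if v \<in> {u,w} then -tt else 0)" for v
      proof -
        have l1: "vertex_label E f v = vertex_label E1 (g({w,p}:=tt)) v + (if v \<in> {u,w} then -tt else 0)"
          unfolding f_def by (subst Ee(1), rule label_insert[OF fE2(2) Ee(2)])
        have l2: "vertex_label E1 (g({w,p}:=tt)) v = vertex_label E2 g v + (if v \<in> {w,p} then tt else 0)"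
          by (subst E1e(1), rule label_insert[OF fE2(1) E1e(2)])
        show ?thesis using l1 l2 by simp
      qed
      have sm: "sum f E = sum g E2"
      proof -
        have l1: "sum f E = sum (g({w,p}:=tt)) E1 + -tt"
          unfolding f_def by (subst Ee(1), rule sum_insert_upd[OF fE2(2) Ee(2)])
        have l2: "sum (g({w,p}:=tt)) E1 = sum g E2 + tt"
          by (subst E1e(1), rule sum_insert_upd[OF fE2(1) E1e(2)])
        show ?thesis using l1 l2 by simp
      qed
      have "\<forall>v\<in>V. \<bar>vertex_label E f v\<bar> \<le> 1"
      proof
        fix v assume v: "v \<in> V"
        show "\<bar>vertex_label E f v\<bar> \<le> 1"
        proof (cases "v = u \<or> v = w")
          case True
          then show ?thesis
          proof
            assume "v = u"
            then show ?thesis unfolding lab using label_zero[OF nu(1), of g] B(3) not_sym[OF wu(1)] ttv(1) by auto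
          next
            assume "v = w"
            then show ?thesis unfolding lab using label_zero[OF nu(2), of g] wu by simp
          qed
        next
          case False
          then have "v \<in> V - {u} - {w}" using v by simp
          then have b: "\<bar>vertex_label E2 g v\<bar> \<le> 1" using g(2) by blast
          show ?thesis
          proof (cases "v = p")
            case True then show ?thesis unfolding lab using ttv(2) B(3) not_sym[OF wu(2)] by simp
          next
            case False then show ?thesis unfolding lab using b \<open>\<not> (v = u \<or> v = w)\<close> by simp
          qed
        qed
      qed
      moreover have "\<forall>e\<in>E. f e \<in> {-1, 1}"
      proof
        fix e assume "e \<in> E"
        show "f e \<in> {-1, 1}"
        proof (cases "e = {u,w}")
          case True then show ?thesis using ttv(1) by (auto simp: f_def)
        next
          case F1: False
          show ?thesis
          proof (cases "e = {w,p}")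
            case True then show ?thesis using F1 ttv(1) by (auto simp: f_def)
          next
            case False
            have "e \<in> insert {u,w} (insert {w,p} E2)" using \<open>e \<in> E\<close> Ee(1) E1e(1) by simp
            then have "e \<in> E2" using F1 False by simp
            then have "g e \<in> {-1, 1}" using g(1) by blast
            then show ?thesis using F1 False by (simp add: f_def)
          qed
        qed
      qed
      moreover have "sum f E \<in> {-1, 1}" using sm g(3) by simp
      ultimately show ?thesis by (intro exI[of _ f]) blast
    qed
  qed
qed


lemma sum_signs:
  assumes "finite A" "\<forall>x\<in>A. h x \<in> {-1, 0, 1::int}"
  shows "sum h A = int (card {x\<in>A. h x = 1}) - int (card {x\<in>A. h x = -1})"
proof -
  have c: "int (card {x\<in>A. P x}) = (\<Sum>x\<in>A. if P x then 1 else 0)" for P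
    using assms(1) by (simp add: sum.inter_filter[symmetric])
  have "sum h A = (\<Sum>x\<in>A. (if h x = 1 then 1 else 0) - (if h x = -1 then 1 else 0))"
    using assms(2) by (intro sum.cong) auto
  also have "\<dots> = int (card {x\<in>A. h x = 1}) - int (card {x\<in>A. h x = -1})"
    by (simp add: sum_subtractf c)
  finally show ?thesis .
qed

lemma double_count:
  assumes "simple_graph V E"
  shows "(\<Sum>v\<in>V. vertex_label E f v) = 2 * sum f E"
proof -
  have fV: "finite V" using assms by (simp add: simple_graph_def)
  have fE: "finite E" using finite_E[OF assms] .
  have "(\<Sum>v\<in>V. vertex_label E f v) = (\<Sum>v\<in>V. \<Sum>e\<in>{e. e \<in> E \<and> v \<in> e}. f e)"
    by (simp add: vertex_label_def)
  also have "\<dots> = (\<Sum>e\<in>E. \<Sum>v\<in>{v. v \<in> V \<and> v \<in> e}. f e)"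
    by (rule sum.swap_restrict[OF fV fE])
  also have "\<dots> = (\<Sum>e\<in>E. 2 * f e)"
  proof (rule sum.cong)
    fix e assume "e \<in> E"
    then have "{v. v \<in> V \<and> v \<in> e} = e" "card e = 2" using assms by (auto simp: simple_graph_def)
    then show "(\<Sum>v\<in>{v. v \<in> V \<and> v \<in> e}. f e) = 2 * f e" by simp
  qed simp
  finally show ?thesis by (simp add: sum_distrib_left)
qed

theorem proposition1:
  fixes V :: "'a set" and E :: "'a set set"
  assumes "is_tree V E" and "even (card V)"
  shows "\<exists>f :: 'a set \<Rightarrow> int.
           (\<forall>e\<in>E. f e \<in> {-1, 1})
         \<and> \<bar>int (edge_count E f (-1)) - int (edge_count E f 1)\<bar> = 1
         \<and> (\<forall>v\<in>V. \<bar>vertex_label E f v\<bar> \<le> 1)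
         \<and> \<bar>int (vertex_count V E f (-1)) - int (vertex_count V E f 1)\<bar> = 2"
proof -
  obtain f :: "'a set \<Rightarrow> int" where f: "\<forall>e\<in>E. f e \<in> {-1, 1}" "\<forall>v\<in>V. \<bar>vertex_label E f v\<bar> \<le> 1"
    "sum f E \<in> {-1, 1}"
    using main[OF assms] by blast
  have sg: "simple_graph V E" using assms(1) by (simp add: is_tree_def)
  have fV: "finite V" using sg by (simp add: simple_graph_def)
  have fE: "finite E" using finite_E[OF sg] .
  have e: "sum f E = int (edge_count E f 1) - int (edge_count E f (-1))"
    unfolding edge_count_def using sum_signs[OF fE, of f] f(1) by auto
  have vl: "\<forall>v\<in>V. vertex_label E f v \<in> {-1, 0, 1}" using f(2) by force
  have v: "(\<Sum>v\<in>V. vertex_label E f v) = int (vertex_count V E f 1) - int (vertex_count V E f (-1))"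
    unfolding vertex_count_def using sum_signs[OF fV, of "vertex_label E f"] vl by auto
  have dc: "(\<Sum>v\<in>V. vertex_label E f v) = 2 * sum f E" using double_count[OF sg] .
  show ?thesis
    apply (rule exI[of _ f])
    using f e v dc by auto
qed

end
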